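(* Let $\mathcal{X}$ be a Polish space, $\mathcal{L}:\mathcal{X}\to[-\infty,\infty]$ measurable, $P\in\mathcal{P}(\mathcal{X})$, $D$ a pre-divergence such that $Q\mapsto D(Q\|P)$ is convex, and $c$ a cost function with $c(x,x)=0$ for all $x$. Suppose there exists $\epsilon>0$ such that $\mathcal{L}\in L^1(Q)$ for all $Q\in\mathcal{P}(\mathcal{X})$ with $D^c(Q\|P)\leq\epsilon$. Then $\mathcal{L}\in L^1(Q)$ for all $Q\in\mathcal{P}(\mathcal{X})$ with $D^c(Q\|P)<\infty$.
   Context: $\mathcal{P}(\mathcal{X})$ is the set of Borel probability measures on the Polish space $\mathcal{X}$. A pre-divergence is $D:\mathcal{P}(\mathcal{X})\times\mathcal{P}(\mathcal{X})\to[0,\infty]$ with $D(\mu\|\mu)=0$ for all $\mu$. A cost function is a lower semicontinuous $c:\mathcal{X}\times\mathcal{X}\to[0,\infty]$, with OT cost $C(\mu,\nu)=\inf\{\int c\,d\pi:\pi_1=\mu,\pi_2=\nu\}$. $D^c(\nu\|\mu)=\inf_{\eta\in\mathcal{P}(\mathcal{X})}\{D(\eta\|\mu)+C(\eta,\nu)\}$. *)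

theory Defs
  imports "HOL-Analysis.Analysis" "HOL-Probability.Probability"
begin

definition prob_measures :: "'a::topological_space measure set" where
  "prob_measures = {M. prob_space M \<and> sets M = sets (borel :: 'a measure)}"

definition lsc :: "('b::topological_space \<Rightarrow> ennreal) \<Rightarrow> bool" where
  "lsc f \<longleftrightarrow> (\<forall>x t. t < f x \<longrightarrow> (\<forall>\<^sub>F y in nhds x. t < f y))"

definition cost_function :: "('a::topological_space \<times> 'a \<Rightarrow> ennreal) \<Rightarrow> bool" where
  "cost_function c \<longleftrightarrow> lsc c"

definition couplings :: "'a::topological_space measure \<Rightarrow> 'a measure \<Rightarrow> ('a \<times> 'a) measure set" where
  "couplings \<mu> \<nu> = {\<pi>. prob_space \<pi> \<and> sets \<pi> = sets (borel :: ('a \<times> 'a) measure)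
      \<and> distr \<pi> borel fst = \<mu> \<and> distr \<pi> borel snd = \<nu>}"

definition OT_cost :: "('a::topological_space \<times> 'a \<Rightarrow> ennreal) \<Rightarrow> 'a measure \<Rightarrow> 'a measure \<Rightarrow> ennreal" where
  "OT_cost c \<mu> \<nu> = (INF \<pi>\<in>couplings \<mu> \<nu>. \<integral>\<^sup>+ z. c z \<partial>\<pi>)"

definition pre_divergence :: "('a::topological_space measure \<Rightarrow> 'a measure \<Rightarrow> ennreal) \<Rightarrow> bool" where
  "pre_divergence D \<longleftrightarrow> (\<forall>\<mu>\<in>prob_measures. D \<mu> \<mu> = 0)"

definition Dc :: "('a::topological_space measure \<Rightarrow> 'a measure \<Rightarrow> ennreal) \<Rightarrow> ('a \<times> 'a \<Rightarrow> ennreal)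
    \<Rightarrow> 'a measure \<Rightarrow> 'a measure \<Rightarrow> ennreal" where
  "Dc D c \<nu> \<mu> = (INF \<eta>\<in>prob_measures. D \<eta> \<mu> + OT_cost c \<eta> \<nu>)"

definition mixture :: "real \<Rightarrow> 'a::topological_space measure \<Rightarrow> 'a measure \<Rightarrow> 'a measure" where
  "mixture t Q1 Q2 = measure_of UNIV (sets (borel :: 'a measure))
      (\<lambda>A. ennreal t * emeasure Q1 A + ennreal (1 - t) * emeasure Q2 A)"

definition convex_in_first :: "('a::topological_space measure \<Rightarrow> 'a measure \<Rightarrow> ennreal) \<Rightarrow> 'a measure \<Rightarrow> bool" where
  "convex_in_first D P \<longleftrightarrow> (\<forall>Q1\<in>prob_measures. \<forall>Q2\<in>prob_measures. \<forall>t\<in>{0..1::real}.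
      D (mixture t Q1 Q2) P \<le> ennreal t * D Q1 P + ennreal (1 - t) * D Q2 P)"

definition ereal_L1 :: "'a measure \<Rightarrow> ('a \<Rightarrow> ereal) \<Rightarrow> bool" where
  "ereal_L1 Q L \<longleftrightarrow> (\<integral>\<^sup>+ x. e2ennreal \<bar>L x\<bar> \<partial>Q) < \<infinity>"

end

theory Submission
  imports Defs
begin

lemma mixture_sets:
  "sets (mixture t Q1 Q2) = sets (borel :: 'a::topological_space measure)"
  unfolding mixture_def
  by (subst sets_measure_of) (auto simp: sets.sigma_sets_eq[of borel, simplified])

lemma space_mixture: "space (mixture t Q1 Q2) = UNIV"
  using sets_eq_imp_space_eq[OF mixture_sets] by simp

lemma emeasure_mixture:
  fixes Q1 Q2 :: "'a::topological_space measure"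
  assumes "sets Q1 = sets borel" "sets Q2 = sets borel" "0 \<le> t" "t \<le> 1"
    and A: "A \<in> sets borel"
  shows "emeasure (mixture t Q1 Q2) A = ennreal t * emeasure Q1 A + ennreal (1 - t) * emeasure Q2 A"
  unfolding mixture_def
proof (rule emeasure_measure_of_sigma)
  show "sigma_algebra UNIV (sets (borel::'a measure))"
    using sets.sigma_algebra_axioms[of borel] by simp
  show "positive (sets borel) (\<lambda>A. ennreal t * emeasure Q1 A + ennreal (1 - t) * emeasure Q2 A)"
    by (simp add: positive_def)
  show "countably_additive (sets borel) (\<lambda>A. ennreal t * emeasure Q1 A + ennreal (1 - t) * emeasure Q2 A)"
  proof (rule countably_additiveI)
    fix F :: "nat \<Rightarrow> 'a set" assume F: "range F \<subseteq> sets borel" "disjoint_family F"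
    have 1: "(\<Sum>i. emeasure Q1 (F i)) = emeasure Q1 (\<Union>i. F i)"
      using F assms by (intro suminf_emeasure) auto
    have 2: "(\<Sum>i. emeasure Q2 (F i)) = emeasure Q2 (\<Union>i. F i)"
      using F assms by (intro suminf_emeasure) auto
    show "(\<Sum>i. ennreal t * emeasure Q1 (F i) + ennreal (1 - t) * emeasure Q2 (F i)) =
         ennreal t * emeasure Q1 (\<Union>i. F i) + ennreal (1 - t) * emeasure Q2 (\<Union>i. F i)"
      by (simp add: suminf_add[symmetric] ennreal_suminf_cmult 1 2)
  qed
qed (use A in auto)

lemma nn_integral_mixture:
  fixes Q1 Q2 :: "'a::topological_space measure"
  assumes s1: "sets Q1 = sets borel" and s2: "sets Q2 = sets borel" and t: "0 \<le> t" "t \<le> 1"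
    and f: "f \<in> borel_measurable borel"
  shows "(\<integral>\<^sup>+x. f x \<partial>mixture t Q1 Q2) = ennreal t * (\<integral>\<^sup>+x. f x \<partial>Q1) + ennreal (1 - t) * (\<integral>\<^sup>+x. f x \<partial>Q2)"
  using f
proof induction
  case (cong f g)
  then show ?case
    by (simp add: space_mixture sets_eq_imp_space_eq[OF s1] sets_eq_imp_space_eq[OF s2] cong: nn_integral_cong_simp)
next
  case (set A)
  then show ?case
    by (simp add: emeasure_mixture[OF s1 s2 t] mixture_sets
        nn_integral_indicator[of A "mixture t Q1 Q2"] s1 s2)
next
  case (mult f c)
  have m1: "f \<in> borel_measurable Q1" "f \<in> borel_measurable Q2" "f \<in> borel_measurable (mixture t Q1 Q2)"
    using mult by (auto simp: measurable_cong_sets[OF s1 refl] measurable_cong_sets[OF s2 refl]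
        measurable_cong_sets[OF mixture_sets refl])
  then show ?case using mult
    by (simp add: nn_integral_cmult distrib_left mult.left_commute)
next
  case (add f g)
  have m1: "f \<in> borel_measurable Q1" "f \<in> borel_measurable Q2" "f \<in> borel_measurable (mixture t Q1 Q2)"
       "g \<in> borel_measurable Q1" "g \<in> borel_measurable Q2" "g \<in> borel_measurable (mixture t Q1 Q2)"
    using add by (auto simp: measurable_cong_sets[OF s1 refl] measurable_cong_sets[OF s2 refl]
        measurable_cong_sets[OF mixture_sets refl])
  then show ?case using add
    by (simp add: nn_integral_add distrib_left algebra_simps)
next
  case (seq U)
  have m1: "\<And>i. U i \<in> borel_measurable Q1" "\<And>i. U i \<in> borel_measurable Q2" "\<And>i. U i \<in> borel_measurable (mixture t Q1 Q2)"
    using seq by (auto simp: measurable_cong_sets[OF s1 refl] measurable_cong_sets[OF s2 refl]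
        measurable_cong_sets[OF mixture_sets refl])
  have "(\<integral>\<^sup>+x. (SUP i. U i x) \<partial>mixture t Q1 Q2) = (SUP i. \<integral>\<^sup>+x. U i x \<partial>mixture t Q1 Q2)"
    using m1 seq by (intro nn_integral_monotone_convergence_SUP) auto
  also have "\<dots> = (SUP i. ennreal t * (\<integral>\<^sup>+x. U i x \<partial>Q1) + ennreal (1 - t) * (\<integral>\<^sup>+x. U i x \<partial>Q2))"
    using seq by simp
  also have "\<dots> = (SUP i. ennreal t * (\<integral>\<^sup>+x. U i x \<partial>Q1)) + (SUP i. ennreal (1 - t) * (\<integral>\<^sup>+x. U i x \<partial>Q2))"
  proof (rule ennreal_SUP_add)
    show "incseq (\<lambda>i. ennreal t * (\<integral>\<^sup>+x. U i x \<partial>Q1))"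
      using seq by (auto simp: incseq_def le_fun_def intro!: mult_left_mono nn_integral_mono)
    show "incseq (\<lambda>i. ennreal (1-t) * (\<integral>\<^sup>+x. U i x \<partial>Q2))"
      using seq by (auto simp: incseq_def le_fun_def intro!: mult_left_mono nn_integral_mono)
  qed
  also have "\<dots> = ennreal t * (\<integral>\<^sup>+x. (SUP i. U i x) \<partial>Q1) + ennreal (1 - t) * (\<integral>\<^sup>+x. (SUP i. U i x) \<partial>Q2)"
    using m1 seq by (simp add: nn_integral_monotone_convergence_SUP SUP_mult_left_ennreal[symmetric])
  finally show ?case by (simp add: image_comp)
qed

lemma prob_mixture:
  assumes "Q1 \<in> prob_measures" "Q2 \<in> prob_measures" "0 \<le> t" "t \<le> 1"
  shows "mixture t Q1 Q2 \<in> prob_measures"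
proof -
  have s: "sets Q1 = sets borel" "sets Q2 = sets borel" "prob_space Q1" "prob_space Q2"
    using assms by (auto simp: prob_measures_def)
  have u: "emeasure Q1 UNIV = 1" "emeasure Q2 UNIV = 1"
    using prob_space.emeasure_space_1[OF s(3)] prob_space.emeasure_space_1[OF s(4)]
      sets_eq_imp_space_eq[OF s(1)] sets_eq_imp_space_eq[OF s(2)] by auto
  have "emeasure (mixture t Q1 Q2) (space (mixture t Q1 Q2)) = ennreal t + ennreal (1 - t)"
    using s assms(3,4) u by (simp add: space_mixture emeasure_mixture)
  also have "\<dots> = 1" using assms(3,4) by (simp add: ennreal_plus[symmetric] del: ennreal_plus)
  finally have "emeasure (mixture t Q1 Q2) (space (mixture t Q1 Q2)) = 1" .
  then show ?thesis
    by (auto simp: prob_measures_def mixture_sets intro!: prob_spaceI)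
qed

lemma distr_mixture:
  fixes Q1 Q2 :: "'a::topological_space measure"
  assumes s1: "sets Q1 = sets borel" and s2: "sets Q2 = sets borel" and t: "0 \<le> t" "t \<le> 1"
    and f: "f \<in> measurable (borel :: 'a measure) (borel :: 'b::topological_space measure)"
  shows "distr (mixture t Q1 Q2) borel f = mixture t (distr Q1 borel f) (distr Q2 borel f)"
proof (rule measure_eqI)
  show "sets (distr (mixture t Q1 Q2) borel f) = sets (mixture t (distr Q1 borel f) (distr Q2 borel f))"
    by (simp add: mixture_sets)
  fix A assume "A \<in> sets (distr (mixture t Q1 Q2) borel f)"
  then have A: "A \<in> sets borel" by simp
  have fm: "f \<in> measurable (mixture t Q1 Q2) borel" "f \<in> measurable Q1 borel" "f \<in> measurable Q2 borel"
    using f by (auto simp: measurable_cong_sets[OF s1 refl] measurable_cong_sets[OF s2 refl]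
        measurable_cong_sets[OF mixture_sets refl])
  have pre: "f -` A \<in> sets borel"
    using measurable_sets[OF f A] by simp
  have sp1: "space Q1 = UNIV" "space Q2 = UNIV"
    using sets_eq_imp_space_eq[OF s1] sets_eq_imp_space_eq[OF s2] by auto
  have "emeasure (distr (mixture t Q1 Q2) borel f) A = emeasure (mixture t Q1 Q2) (f -` A)"
    using emeasure_distr[OF fm(1) A] by (simp add: space_mixture)
  also have "\<dots> = ennreal t * emeasure Q1 (f -` A) + ennreal (1 - t) * emeasure Q2 (f -` A)"
    by (rule emeasure_mixture[OF s1 s2 t pre])
  also have "\<dots> = ennreal t * emeasure (distr Q1 borel f) A + ennreal (1 - t) * emeasure (distr Q2 borel f) A"
    using emeasure_distr[OF fm(2) A] emeasure_distr[OF fm(3) A] sp1 by simp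
  also have "\<dots> = emeasure (mixture t (distr Q1 borel f) (distr Q2 borel f)) A"
    by (rule emeasure_mixture[symmetric]) (use t A in auto)
  finally show "emeasure (distr (mixture t Q1 Q2) borel f) A = emeasure (mixture t (distr Q1 borel f) (distr Q2 borel f)) A" .
qed

lemma lsc_measurable:
  fixes c :: "'b::second_countable_topology \<Rightarrow> ennreal"
  assumes "lsc c"
  shows "c \<in> borel_measurable borel"
proof (rule borel_measurableI_greater)
  fix y
  have "open {x. y < c x}"
  proof (rule open_subopen[THEN iffD2, rule_format])
    fix x assume "x \<in> {x. y < c x}"
    then have "y < c x" by simp
    then have "\<forall>\<^sub>F z in nhds x. y < c z" using assms unfolding lsc_def by blast
    then obtain T where "open T" "x \<in> T" "\<forall>z\<in>T. y < c z"
      unfolding eventually_nhds by blast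
    then show "\<exists>T. open T \<and> x \<in> T \<and> T \<subseteq> {x. y < c x}" by blast
  qed
  then show "{x \<in> space borel. y < c x} \<in> sets borel" by simp
qed

theorem lemma4:
  fixes L :: "'a::polish_space \<Rightarrow> ereal"
    and P :: "'a measure"
    and D :: "'a measure \<Rightarrow> 'a measure \<Rightarrow> ennreal"
    and c :: "'a \<times> 'a \<Rightarrow> ennreal"
  assumes L_meas: "L \<in> borel_measurable borel"
    and P: "P \<in> prob_measures"
    and D: "pre_divergence D"
    and D_convex: "convex_in_first D P"
    and c: "cost_function c"
    and c_diag: "\<And>x. c (x, x) = 0"
    and eps: "\<exists>\<epsilon>>0. \<forall>Q\<in>prob_measures. Dc D c Q P \<le> ennreal \<epsilon> \<longrightarrow> ereal_L1 Q L"
  shows "\<forall>Q\<in>prob_measures. Dc D c Q P < \<infinity> \<longrightarrow> ereal_L1 Q L"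
proof (intro ballI impI)
  fix Q assume Q: "Q \<in> prob_measures" and fin: "Dc D c Q P < \<infinity>"
  obtain \<epsilon> where e: "\<epsilon> > 0" and eL: "\<And>Q. Q\<in>prob_measures \<Longrightarrow> Dc D c Q P \<le> ennreal \<epsilon> \<Longrightarrow> ereal_L1 Q L"
    using eps by auto
  have cm: "c \<in> borel_measurable borel" using c lsc_measurable by (auto simp: cost_function_def)
  obtain \<eta> where eta: "\<eta> \<in> prob_measures" and eta2: "D \<eta> P + OT_cost c \<eta> Q < \<infinity>"
    using fin unfolding Dc_def by (auto simp: INF_less_iff)
  obtain \<pi> where pi: "\<pi> \<in> couplings \<eta> Q" and pi2: "(\<integral>\<^sup>+z. c z \<partial>\<pi>) < \<infinity>"
    using eta2 unfolding OT_cost_def by (auto simp: INF_less_iff)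
  define B where "B = D \<eta> P + (\<integral>\<^sup>+z. c z \<partial>\<pi>)"
  have Bfin: "B < \<infinity>" using eta2 pi2 by (auto simp: B_def)
  define K where "K = enn2real B"
  have BK: "B = ennreal K" using Bfin by (simp add: K_def)
  have K0: "K \<ge> 0" by (simp add: K_def)
  define t where "t = min 1 (\<epsilon> / (K + 1))"
  have t0: "t > 0" using e K0 by (simp add: t_def)
  have t1: "t \<le> 1" by (simp add: t_def)
  have tK: "t * K \<le> \<epsilon>"
  proof -
    have "t * K \<le> \<epsilon> / (K + 1) * K" using K0 by (intro mult_right_mono) (auto simp: t_def)
    also have "\<dots> \<le> \<epsilon>" using K0 e by (simp add: field_simps)
    finally show ?thesis .
  qed
  have sP: "sets P = sets borel" "prob_space P" using P by (auto simp: prob_measures_def)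
  have sQ: "sets Q = sets borel" "prob_space Q" using Q by (auto simp: prob_measures_def)
  have seta: "sets \<eta> = sets borel" using eta by (auto simp: prob_measures_def)
  have spi: "sets \<pi> = sets borel" "prob_space \<pi>" "distr \<pi> borel fst = \<eta>" "distr \<pi> borel snd = Q"
    using pi by (auto simp: couplings_def)
  have diagm: "(\<lambda>x::'a. (x, x)) \<in> measurable borel borel"
  proof -
    have "(\<lambda>x::'a. (x, x)) \<in> measurable borel (borel \<Otimes>\<^sub>M borel)" by measurable
    then show ?thesis by (simp add: borel_prod)
  qed
  have fstm: "fst \<in> measurable (borel :: ('a\<times>'a) measure) borel"
    by (simp add: borel_prod[symmetric])
  have sndm: "snd \<in> measurable (borel :: ('a\<times>'a) measure) borel"
    by (simp add: borel_prod[symmetric])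
  define \<Delta> where "\<Delta> = distr P borel (\<lambda>x::'a. (x, x))"
  have diagmP: "(\<lambda>x::'a. (x, x)) \<in> measurable P borel"
    using diagm by (simp add: measurable_cong_sets[OF sP(1) refl])
  have sD: "sets \<Delta> = sets borel" "prob_space \<Delta>" 
    using prob_space.prob_space_distr[OF sP(2) diagmP] by (auto simp: \<Delta>_def)
  have Dfst: "distr \<Delta> borel fst = P"
    unfolding \<Delta>_def using diagmP fstm
    by (subst distr_distr) (auto simp: comp_def distr_id2 sP(1))
  have Dsnd: "distr \<Delta> borel snd = P"
    unfolding \<Delta>_def using diagmP sndm
    by (subst distr_distr) (auto simp: comp_def distr_id2 sP(1))
  have Dint: "(\<integral>\<^sup>+z. c z \<partial>\<Delta>) = 0"
    unfolding \<Delta>_def using diagmP cm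
    by (subst nn_integral_distr) (auto simp: c_diag)
  define \<eta>t where "\<eta>t = mixture t \<eta> P"
  define Qt where "Qt = mixture t Q P"
  define \<pi>t where "\<pi>t = mixture t \<pi> \<Delta>"
  have etat: "\<eta>t \<in> prob_measures" using prob_mixture[OF eta P] t0 t1 by (simp add: \<eta>t_def)
  have Qt: "Qt \<in> prob_measures" using prob_mixture[OF Q P] t0 t1 by (simp add: Qt_def)
  have pit: "\<pi>t \<in> couplings \<eta>t Qt"
  proof -
    have "prob_space \<pi>t"
      using prob_mixture[of \<pi> \<Delta> t] spi sD t0 t1 by (auto simp: \<pi>t_def prob_measures_def)
    moreover have "distr \<pi>t borel fst = \<eta>t"
      unfolding \<pi>t_def \<eta>t_def using t0 t1 spi sD fstm Dfst
      by (subst distr_mixture) auto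
    moreover have "distr \<pi>t borel snd = Qt"
      unfolding \<pi>t_def Qt_def using t0 t1 spi sD sndm Dsnd
      by (subst distr_mixture) auto
    ultimately show ?thesis by (simp add: couplings_def \<pi>t_def mixture_sets)
  qed
  have DPP: "D P P = 0" using D P by (simp add: pre_divergence_def)
  have "Dc D c Qt P \<le> D \<eta>t P + OT_cost c \<eta>t Qt"
    unfolding Dc_def using etat by (rule INF_lower)
  also have "\<dots> \<le> ennreal t * D \<eta> P + (\<integral>\<^sup>+z. c z \<partial>\<pi>t)"
  proof (rule add_mono)
    show "D \<eta>t P \<le> ennreal t * D \<eta> P"
      using D_convex eta P t0 t1 DPP by (force simp: convex_in_first_def \<eta>t_def)
    show "OT_cost c \<eta>t Qt \<le> (\<integral>\<^sup>+z. c z \<partial>\<pi>t)"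
      unfolding OT_cost_def using pit by (rule INF_lower)
  qed
  also have "(\<integral>\<^sup>+z. c z \<partial>\<pi>t) = ennreal t * (\<integral>\<^sup>+z. c z \<partial>\<pi>)"
    unfolding \<pi>t_def using spi sD t0 t1 cm Dint by (subst nn_integral_mixture) auto
  also have "ennreal t * D \<eta> P + ennreal t * (\<integral>\<^sup>+z. c z \<partial>\<pi>) = ennreal t * B"
    by (simp add: B_def distrib_left)
  also have "\<dots> = ennreal (t * K)" using BK t0 K0 by (simp add: ennreal_mult)
  also have "\<dots> \<le> ennreal \<epsilon>" using tK by (rule ennreal_leI)
  finally have "ereal_L1 Qt L" using eL Qt by blast
  then have "(\<integral>\<^sup>+x. e2ennreal \<bar>L x\<bar> \<partial>Qt) < \<infinity>" by (simp add: ereal_L1_def)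
  moreover have "(\<integral>\<^sup>+x. e2ennreal \<bar>L x\<bar> \<partial>Qt) =
      ennreal t * (\<integral>\<^sup>+x. e2ennreal \<bar>L x\<bar> \<partial>Q) + ennreal (1 - t) * (\<integral>\<^sup>+x. e2ennreal \<bar>L x\<bar> \<partial>P)"
    unfolding Qt_def using sQ sP t0 t1 L_meas by (subst nn_integral_mixture) auto
  ultimately have "ennreal t * (\<integral>\<^sup>+x. e2ennreal \<bar>L x\<bar> \<partial>Q) < \<infinity>" by auto
  then show "ereal_L1 Q L" using t0 by (auto simp: ereal_L1_def ennreal_mult_less_top)
qed

end
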